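(* Let $h \in \mathbb{R}[t]$ satisfy $h(t) \geq 1$ for $t \geq 0$ and $h(t)\ge 0$ for all $t \in \mathbb{R}$, and let $H(x_1, \ldots, x_d) = \prod_{j=1}^d h(x_j)$. For $\mathcal{I} \subseteq \{1,\dots,d\}$ let $H_{\mathcal{I}}(x) = H(\sigma_{\mathcal{I}}x)$, where $\sigma_{\mathcal{I}}$ changes the sign of the coordinates $x_k$, $k\in\mathcal{I}$. Assume $\mu$ is an admissible measure on $\mathbb{R}^d$ which is indeterminate. Then there exist $a \in \mathbb{R}^d$ and a constant $\gamma_a >0$ such that $$\sum_{\mathcal{I} \subseteq \{1, \ldots, d \}} \int H_\mathcal{I}(x-a)\, d\mu(x) \;\geq\; \mu(\mathbb{R}^d) + \gamma_a .$$
   Context: An admissible measure on $\mathbb{R}^d$ is a positive Radon measure $\mu$ such that $\int |p|\,d\mu<\infty$ for every polynomial $p$. $\mu$ is indeterminate if there is an admissible measure on $\mathbb{R}^d$, distinct from $\mu$, giving the same integral to every polynomial. The sum is over all subsets, including the empty set. *)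

theory Defs
  imports "HOL-Analysis.Analysis" "HOL-Computational_Algebra.Polynomial"
begin

inductive_set poly_fun :: "(real ^ 'n \<Rightarrow> real) set" where
  const: "(\<lambda>x. c) \<in> poly_fun"
| coord: "(\<lambda>x. x $ k) \<in> poly_fun"
| add: "p \<in> poly_fun \<Longrightarrow> q \<in> poly_fun \<Longrightarrow> (\<lambda>x. p x + q x) \<in> poly_fun"
| mult: "p \<in> poly_fun \<Longrightarrow> q \<in> poly_fun \<Longrightarrow> (\<lambda>x. p x * q x) \<in> poly_fun"

text \<open>Positive Radon measure on R^d: a Borel measure, finite on compact sets
(on R^d such measures are automatically regular).\<close>
definition radon_measure :: "(real ^ 'n) measure \<Rightarrow> bool" where
  "radon_measure M \<longleftrightarrow> sets M = sets borel \<and>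
     (\<forall>K. compact K \<longrightarrow> emeasure M K < \<infinity>)"

definition admissible :: "(real ^ 'n) measure \<Rightarrow> bool" where
  "admissible M \<longleftrightarrow> radon_measure M \<and> (\<forall>p\<in>poly_fun. integrable M p)"

definition indeterminate :: "(real ^ 'n) measure \<Rightarrow> bool" where
  "indeterminate M \<longleftrightarrow> (\<exists>N. admissible N \<and> N \<noteq> M \<and>
     (\<forall>p\<in>poly_fun. (\<integral>x. p x \<partial>N) = (\<integral>x. p x \<partial>M)))"

definition sigma_sign :: "'n set \<Rightarrow> real ^ 'n \<Rightarrow> real ^ 'n" where
  "sigma_sign I x = (\<chi> k. if k \<in> I then - (x $ k) else x $ k)"

definition prodH :: "real poly \<Rightarrow> real ^ 'n \<Rightarrow> real" where
  "prodH h x = (\<Prod>j\<in>UNIV. poly h (x $ j))"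

end

theory Submission imports Defs begin

lemma poly_fun_prod:
  assumes "finite A" "\<And>j. j \<in> A \<Longrightarrow> f j \<in> poly_fun"
  shows "(\<lambda>x. \<Prod>j\<in>A. f j x) \<in> poly_fun"
  using assms
proof (induction A rule: finite_induct)
  case empty
  then show ?case using poly_fun.const[of 1] by simp
next
  case (insert j A)
  have "(\<lambda>x. f j x * (\<Prod>j\<in>A. f j x)) \<in> poly_fun"
    using insert by (intro poly_fun.mult) auto
  then show ?case using insert by simp
qed

lemma poly_fun_poly:
  assumes "p \<in> poly_fun"
  shows "(\<lambda>x. poly q (p x)) \<in> poly_fun"
proof (induction q)
  case 0
  then show ?case using poly_fun.const[of 0] by simp
next
  case (pCons a q)
  have "(\<lambda>x. a + p x * poly q (p x)) \<in> poly_fun"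
    using pCons assms by (intro poly_fun.add poly_fun.mult poly_fun.const)
  then show ?case by simp
qed

lemma poly_fun_H:
  "(\<lambda>x. prodH h (sigma_sign I (x - a))) \<in> poly_fun"
proof -
  have c: "(\<lambda>x. (sigma_sign I (x - a)) $ j) \<in> poly_fun" for j
  proof -
    have "(\<lambda>x. (if j\<in>I then -1 else 1) * x$j + (if j\<in>I then a$j else -a$j)) \<in> poly_fun"
      by (intro poly_fun.add poly_fun.mult poly_fun.const poly_fun.coord)
    moreover have "(\<lambda>x. (if j\<in>I then -1 else 1) * x$j + (if j\<in>I then a$j else -a$j))
        = (\<lambda>x. (sigma_sign I (x - a)) $ j)"
      by (auto simp: sigma_sign_def)
    ultimately show ?thesis by simp
  qed
  show ?thesis unfolding prodH_def
    by (intro poly_fun_prod poly_fun_poly c) auto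
qed

lemma sum_H:
  "(\<Sum>I\<in>Pow (UNIV :: 'n::finite set). prodH h (sigma_sign I y))
     = (\<Prod>j\<in>UNIV. poly h (-(y$j)) + poly h (y$j))"
proof -
  have "(\<Prod>j\<in>UNIV. poly h (-(y$j)) + poly h (y$j))
     = (\<Sum>X\<in>Pow UNIV. (\<Prod>j\<in>X. poly h (-(y$j))) * (\<Prod>j\<in>UNIV-X. poly h (y$j)))"
    by (rule prod_add) simp
  also have "\<dots> = (\<Sum>I\<in>Pow (UNIV :: 'n::finite set). prodH h (sigma_sign I y))"
  proof (rule sum.cong[OF refl])
    fix X :: "'n set"
    have "prodH h (sigma_sign X y) = (\<Prod>j\<in>UNIV. if j \<in> X then poly h (-(y$j)) else poly h (y$j))"
      unfolding prodH_def sigma_sign_def by (intro prod.cong) auto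
    also have "\<dots> = (\<Prod>j\<in>X. poly h (-(y$j))) * (\<Prod>j\<in>UNIV-X. poly h (y$j))"
      by (subst prod.If_cases) (auto simp: Diff_eq)
    finally show "(\<Prod>j\<in>X. poly h (-(y$j))) * (\<Prod>j\<in>UNIV-X. poly h (y$j)) = prodH h (sigma_sign X y)" by simp
  qed
  finally show ?thesis by simp
qed

lemma admissible_finite:
  assumes "admissible (M :: (real ^ 'n) measure)"
  shows "finite_measure M"
proof -
  have "integrable M (\<lambda>x. 1::real)"
    using assms poly_fun.const[of 1] unfolding admissible_def by auto
  then have "(\<integral>\<^sup>+x. norm (1::real) \<partial>M) < \<infinity>"
    by (simp add: integrable_iff_bounded)
  then have "emeasure M (space M) \<noteq> \<infinity>" by simp
  then show ?thesis by (rule finite_measureI)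
qed

lemma admissible_nonzero:
  assumes "admissible (\<mu> :: (real ^ 'n) measure)" "indeterminate \<mu>"
  shows "emeasure \<mu> (space \<mu>) \<noteq> 0"
proof
  assume z: "emeasure \<mu> (space \<mu>) = 0"
  obtain N where N: "admissible N" "N \<noteq> \<mu>"
    "\<And>p. p \<in> poly_fun \<Longrightarrow> (\<integral>x. p x \<partial>N) = (\<integral>x. p x \<partial>\<mu>)"
    using assms(2) unfolding indeterminate_def by blast
  interpret Nf: finite_measure N using admissible_finite[OF N(1)] .
  interpret Mf: finite_measure \<mu> using admissible_finite[OF assms(1)] .
  have "(\<integral>x. (1::real) \<partial>N) = (\<integral>x. 1 \<partial>\<mu>)"
    using N(3)[OF poly_fun.const[of 1]] .
  then have "measure N (space N) = measure \<mu> (space \<mu>)" by simp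
  also have "\<dots> = 0" using z by (simp add: Mf.emeasure_eq_measure)
  finally have zN: "emeasure N (space N) = 0" by (simp add: Nf.emeasure_eq_measure)
  have sN: "sets N = sets \<mu>" using N(1) assms(1) unfolding admissible_def radon_measure_def by simp
  have "N = \<mu>"
  proof (rule measure_eqI[OF sN])
    fix A assume "A \<in> sets N"
    then have "emeasure N A = 0" "emeasure \<mu> A = 0"
      using emeasure_space[of N A] emeasure_space[of \<mu> A] zN z sN
      by (auto simp: sets_eq_imp_space_eq[OF sN])
    then show "emeasure N A = emeasure \<mu> A" by simp
  qed
  with N(2) show False by simp
qed

theorem mainTheorem7:
  fixes h :: "real poly" and \<mu> :: "(real ^ 'n) measure"
  assumes "\<And>t. t \<ge> 0 \<Longrightarrow> poly h t \<ge> 1"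
    and "\<And>t. poly h t \<ge> 0"
    and "admissible \<mu>"
    and "indeterminate \<mu>"
  shows "\<exists>(a :: real ^ 'n) (\<gamma> :: real). \<gamma> > 0 \<and>
    (\<Sum>I\<in>Pow (UNIV :: 'n set). \<integral>x. prodH h (sigma_sign I (x - a)) \<partial>\<mu>)
      \<ge> measure \<mu> (space \<mu>) + \<gamma>"
proof -
  define g where "g t = poly h (-t) + poly h t" for t
  have g1: "g t \<ge> 1" for t
  proof (cases "t \<ge> 0")
    case True then show ?thesis using assms(1)[of t] assms(2)[of "-t"] by (simp add: g_def)
  next
    case False then show ?thesis using assms(1)[of "-t"] assms(2)[of t] by (simp add: g_def)
  qed
  define Z where "Z = {t. g t = 1}"
  define q where "q = pcompose h [:0,-1:] + h - 1"
  have pq: "poly q t = g t - 1" for t by (simp add: q_def g_def poly_pcompose)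
  have "q \<noteq> 0"
  proof
    assume "q = 0"
    then have "poly q 0 = 0" by simp
    then show False using pq[of 0] assms(1)[of 0] by (simp add: g_def)
  qed
  then have "finite {t. poly q t = 0}" by (rule poly_roots_finite)
  moreover have "{t. poly q t = 0} = Z" by (auto simp: pq Z_def)
  ultimately have fZ: "finite Z" by simp
  define D where "D = (\<lambda>(u,v). u - v) ` (Z \<times> Z)"
  have "finite D" using fZ by (simp add: D_def)
  then obtain t :: real where t: "t \<notin> D"
    using ex_new_if_finite[OF infinite_UNIV_char_0] by blast
  interpret Mf: finite_measure \<mu> using admissible_finite[OF assms(3)] .
  have nz: "emeasure \<mu> (space \<mu>) \<noteq> 0" by (rule admissible_nonzero[OF assms(3,4)])
  define k :: 'n where "k = undefined"
  have "\<exists>c. \<not> (AE x in \<mu>. x$k - c \<in> Z)"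
  proof (rule ccontr)
    assume "\<not> ?thesis"
    then have "AE x in \<mu>. x$k - 0 \<in> Z" "AE x in \<mu>. x$k - t \<in> Z" by blast+
    then have "AE x in \<mu>. False"
    proof eventually_elim
      case (elim x)
      then have "(x$k - 0) - (x$k - t) \<in> D" unfolding D_def by force
      then show False using t by simp
    qed
    then have "ae_filter \<mu> = bot" using trivial_limit_def by blast
    with nz show False by (simp add: ae_filter_eq_bot_iff)
  qed
  then obtain c where c: "\<not> (AE x in \<mu>. x$k - c \<in> Z)" by blast
  define a :: "real ^ 'n" where "a = (\<chi> j. if j = k then c else 0)"
  define F where "F x = (\<Sum>I\<in>Pow (UNIV :: 'n set). prodH h (sigma_sign I (x - a)))" for x
  have Fprod: "F x = (\<Prod>j\<in>UNIV. g ((x - a)$j))" for x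
    unfolding F_def g_def by (rule sum_H)
  have Fk: "F x \<ge> g (x$k - c)" for x
  proof -
    have "F x = g ((x - a)$k) * (\<Prod>j\<in>UNIV - {k}. g ((x - a)$j))"
      unfolding Fprod by (simp add: prod.remove)
    moreover have "(\<Prod>j\<in>UNIV - {k}. g ((x - a)$j)) \<ge> 1"
      by (rule prod_ge_1) (use g1 in auto)
    moreover have "(x - a)$k = x$k - c" by (simp add: a_def)
    moreover have "g (x$k - c) \<ge> 0" using g1[of "x$k - c"] by simp
    ultimately show ?thesis by (metis mult_le_cancel_left1 not_less)
  qed
  have F1: "F x \<ge> 1" for x using Fk[of x] g1[of "x$k - c"] by simp
  have intI: "integrable \<mu> (\<lambda>x. prodH h (sigma_sign I (x - a)))" for I
    using assms(3) poly_fun_H[of h I a] unfolding admissible_def by auto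
  have intF: "integrable \<mu> F" unfolding F_def using intI by auto
  have sumeq: "(\<Sum>I\<in>Pow (UNIV :: 'n set). \<integral>x. prodH h (sigma_sign I (x - a)) \<partial>\<mu>) = (\<integral>x. F x \<partial>\<mu>)"
    unfolding F_def by (rule Bochner_Integration.integral_sum[symmetric]) (rule intI)
  define \<gamma> where "\<gamma> = (\<integral>x. F x - 1 \<partial>\<mu>)"
  have geq: "\<gamma> = (\<integral>x. F x \<partial>\<mu>) - measure \<mu> (space \<mu>)"
    unfolding \<gamma>_def using intF by (subst Bochner_Integration.integral_diff) auto
  have intF1: "integrable \<mu> (\<lambda>x. F x - 1)" using intF by auto
  have "\<gamma> \<ge> 0" unfolding \<gamma>_def by (rule integral_nonneg_AE) (use F1 in auto)
  moreover have "\<gamma> \<noteq> 0"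
  proof
    assume "\<gamma> = 0"
    then have "AE x in \<mu>. F x - 1 = 0"
      unfolding \<gamma>_def using integral_nonneg_eq_0_iff_AE[OF intF1] F1 by auto
    then have "AE x in \<mu>. x$k - c \<in> Z"
    proof eventually_elim
      case (elim x)
      then have "g (x$k - c) \<le> 1" using Fk[of x] by simp
      then show ?case using g1[of "x$k - c"] by (simp add: Z_def)
    qed
    with c show False by simp
  qed
  ultimately have "\<gamma> > 0" by simp
  then show ?thesis using sumeq geq by (intro exI[of _ a] exI[of _ \<gamma>]) auto
qed

end
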